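(* Let $n\ge 2$ and let $\Delta(SD_{8n})$ be the commuting graph of the semidihedral group $SD_{8n}$. (i) If $n$ is odd, the Sombor spectrum of $\Delta(SD_{8n})$ consists of $-(8n-1)\sqrt2$ with multiplicity $3$, $-(4n-1)\sqrt2$ with multiplicity $4n-5$, $-7\sqrt2$ with multiplicity $3n$, $21\sqrt2$ with multiplicity $n-1$, and the three roots (with multiplicity) of \[\big(x-3(8n-1)\sqrt2\big)\big(x-(4n-5)(4n-1)\sqrt2\big)(x-21\sqrt2)-32(n-1)(40n^2-12n+1)(x-21\sqrt2)-32n(32n^2-8n+25)\big(x-(4n-1)(4n-5)\sqrt2\big).\] (ii) If $n$ is even, the Sombor spectrum of $\Delta(SD_{8n})$ consists of $-(8n-1)\sqrt2$ with multiplicity $1$, $-(4n-1)\sqrt2$ with multiplicity $4n-3$, $-3\sqrt2$ with multiplicity $2n$, $3\sqrt2$ with multiplicity $2n-1$, and the three roots (with multiplicity) of \[\big(x-(8n-1)\sqrt2\big)\big(x-(4n-1)(4n-3)\sqrt2\big)(x-3\sqrt2)-8(2n-1)(40n^2-12n+1)(x-3\sqrt2)-16n(32n^2-8n+5)\big(x-(4n-1)(4n-3)\sqrt2\big).\]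
   Context: For a finite simple graph $\Gamma$ with vertices $u_1,\dots,u_N$, the Sombor matrix $S(\Gamma)$ has $(i,j)$ entry $\sqrt{\deg(u_i)^2+\deg(u_j)^2}$ if $u_i,u_j$ are adjacent and $0$ otherwise; the Sombor spectrum is the multiset of its eigenvalues. The semidihedral group is $SD_{8n}=\langle a,b: a^{4n}=b^2=e,\ ba=a^{2n-1}b\rangle$ of order $8n$. The commuting graph $\Delta(G)$ of a group $G$ has vertex set $G$, two distinct vertices $x,y$ being adjacent iff $xy=yx$. *)

theory Defs
  imports "Jordan_Normal_Form.Char_Poly" "HOL-Computational_Algebra.Polynomial"
begin

text \<open>Concrete model of SD_{8n} = <a,b | a^(4n)=b^2=e, ba=a^(2n-1)b>:
  the pair (i,j) with i < 4n, j < 2 stands for a^i b^j.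
  Since b a^k = a^((2n-1)k) b, we get
  (a^i b^j)(a^k b^l) = a^(i + (2n-1)^j k) b^(j+l).\<close>

definition sd_mult :: "nat \<Rightarrow> nat \<times> nat \<Rightarrow> nat \<times> nat \<Rightarrow> nat \<times> nat" where
  "sd_mult n x y = (case x of (i, j) \<Rightarrow> case y of (k, l) \<Rightarrow>
      ((i + (2 * n - 1) ^ j * k) mod (4 * n), (j + l) mod 2))"

definition sd_list :: "nat \<Rightarrow> (nat \<times> nat) list" where
  "sd_list n = [(i, j). j \<leftarrow> [0..<2], i \<leftarrow> [0..<4 * n]]"

definition commuting_adj :: "nat \<Rightarrow> nat \<times> nat \<Rightarrow> nat \<times> nat \<Rightarrow> bool" where
  "commuting_adj n x y \<longleftrightarrow> x \<noteq> y \<and> sd_mult n x y = sd_mult n y x"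

definition graph_deg :: "'v list \<Rightarrow> ('v \<Rightarrow> 'v \<Rightarrow> bool) \<Rightarrow> 'v \<Rightarrow> nat" where
  "graph_deg vs E x = card {y \<in> set vs. E x y}"

definition sombor_matrix :: "'v list \<Rightarrow> ('v \<Rightarrow> 'v \<Rightarrow> bool) \<Rightarrow> complex mat" where
  "sombor_matrix vs E = mat (length vs) (length vs) (\<lambda>(i, j).
     if E (vs ! i) (vs ! j)
     then complex_of_real (sqrt (real (graph_deg vs E (vs ! i)) ^ 2 + real (graph_deg vs E (vs ! j)) ^ 2))
     else 0)"

definition sombor_spectrum :: "'v list \<Rightarrow> ('v \<Rightarrow> 'v \<Rightarrow> bool) \<Rightarrow> complex multiset" where
  "sombor_spectrum vs E = proots (char_poly (sombor_matrix vs E))"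

end

theory Submission
  imports Defs
begin


definition bsize :: "nat \<Rightarrow> (nat \<Rightarrow> nat) \<Rightarrow> nat \<Rightarrow> nat" where
  "bsize N blk b = card {i. i < N \<and> blk i = b}"

lemma sum_delta1:
  fixes f :: "nat \<Rightarrow> 'a::comm_ring_1"
  assumes "a < N"
  shows "(\<Sum>i\<in>{0..<N}. f i * (if i = a then 1 else 0)) = f a"
  using assms by (simp add: sum.delta' if_distrib cong: if_cong)

lemma sum_delta2:
  fixes f :: "nat \<Rightarrow> 'a::comm_ring_1"
  assumes "a < N" "b < N" "a \<noteq> b"
  shows "(\<Sum>i\<in>{0..<N}. f i * (if i = a then 1 else if i = b then -1 else 0)) = f a - f b"
proof -
  have "(\<Sum>i\<in>{0..<N}. f i * (if i = a then 1 else if i = b then -1 else 0))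
     = (\<Sum>i\<in>{0..<N}. f i * (if i = a then 1 else 0) - f i * (if i = b then 1 else 0))"
    by (rule sum.cong) (use assms in auto)
  also have "\<dots> = f a - f b" using assms by (simp add: sum_subtractf sum_delta1)
  finally show ?thesis .
qed

lemma colsum:
  fixes A :: "'a::comm_ring_1 mat"
  assumes Aij: "\<forall>i<N. \<forall>j<N. A $$ (i,j) = (if blk i = blk j then (if i = j then \<delta> (blk i) else \<alpha> (blk i)) else \<beta> (blk i) (blk j))"
  and j: "j < N"
  shows "(\<Sum>i\<in>{0..<N}. if blk i = k then A $$ (i,j) else 0) =
    (if blk j = k then \<delta> k + of_nat (bsize N blk k - 1) * \<alpha> k else of_nat (bsize N blk k) * \<beta> k (blk j))"
proof -
  let ?S = "{i. i < N \<and> blk i = k}"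
  have fin: "finite ?S" by simp
  have "(\<Sum>i\<in>{0..<N}. if blk i = k then A $$ (i,j) else 0) = (\<Sum>i\<in>?S. A $$ (i,j))"
  proof -
    have "?S = {i\<in>{0..<N}. blk i = k}" by auto
    moreover have "(\<Sum>i\<in>{i\<in>{0..<N}. blk i = k}. A $$ (i,j)) = (\<Sum>i\<in>{0..<N}. if blk i = k then A $$ (i,j) else 0)"
      by (rule sum.inter_filter) simp
    ultimately show ?thesis by simp
  qed
  also have "\<dots> = (if blk j = k then \<delta> k + of_nat (bsize N blk k - 1) * \<alpha> k else of_nat (bsize N blk k) * \<beta> k (blk j))"
  proof (cases "blk j = k")
    case True
    have jS: "j \<in> ?S" using True j by simp
    have "(\<Sum>i\<in>?S. A $$ (i,j)) = A $$ (j,j) + (\<Sum>i\<in>?S - {j}. A $$ (i,j))"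
      using sum.remove[OF fin jS] by simp
    also have "(\<Sum>i\<in>?S - {j}. A $$ (i,j)) = (\<Sum>i\<in>?S - {j}. \<alpha> k)"
      by (rule sum.cong) (use Aij j True in auto)
    also have "\<dots> = of_nat (card (?S - {j})) * \<alpha> k" by simp
    also have "card (?S - {j}) = bsize N blk k - 1" unfolding bsize_def using jS fin by simp
    finally show ?thesis using True Aij j by simp
  next
    case False
    have "(\<Sum>i\<in>?S. A $$ (i,j)) = (\<Sum>i\<in>?S. \<beta> k (blk j))"
      by (rule sum.cong) (use Aij j False in auto)
    then show ?thesis using False unfolding bsize_def by simp
  qed
  finally show ?thesis .
qed

lemma char_poly_four_block_upper_right_zero:
  fixes A1 :: "'a::idom mat"
  assumes A1: "A1 \<in> carrier_mat n n" and A3: "A3 \<in> carrier_mat m n" and A4: "A4 \<in> carrier_mat m m"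
  shows "char_poly (four_block_mat A1 (0\<^sub>m n m) A3 A4) = char_poly A1 * char_poly A4"
proof -
  let ?cm = "\<lambda> A. [:0, 1:] \<cdot>\<^sub>m 1\<^sub>m (dim_row A) + map_mat (\<lambda>a. [:- a:]) A"
  let ?B3 = "map_mat (\<lambda>a. [:- a:]) A3"
  have "char_poly (four_block_mat A1 (0\<^sub>m n m) A3 A4) = det (?cm (four_block_mat A1 (0\<^sub>m n m) A3 A4))"
    unfolding char_poly_defs using A1 A4 by simp
  also have "?cm (four_block_mat A1 (0\<^sub>m n m) A3 A4) = four_block_mat (?cm A1) (0\<^sub>m n m) ?B3 (?cm A4)"
    by (rule eq_matI, insert A1 A3 A4, auto simp: one_poly_def)
  also have "det \<dots> = det (?cm A1) * det (?cm A4)"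
    by (rule det_four_block_mat_upper_right_zero, insert A1 A3 A4, auto)
  also have "\<dots> = char_poly A1 * char_poly A4" unfolding char_poly_defs ..
  finally show ?thesis .
qed

lemma block_char_poly:
  fixes A :: "'a::field mat"
  assumes A: "A \<in> carrier_mat N N"
  and blk: "\<forall>i<N. blk i < B"
  and rep: "\<forall>b<B. rep b < N \<and> blk (rep b) = b"
  and Aij: "\<forall>i<N. \<forall>j<N. A $$ (i,j) = (if blk i = blk j then (if i = j then \<delta> (blk i) else \<alpha> (blk i)) else \<beta> (blk i) (blk j))"
  shows "char_poly A = char_poly (mat B B (\<lambda>(b,b'). if b = b' then \<delta> b + of_nat (bsize N blk b - 1) * \<alpha> b else of_nat (bsize N blk b) * \<beta> b b'))
          * (\<Prod>b<B. [:-(\<delta> b - \<alpha> b), 1:] ^ (bsize N blk b - 1))"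
proof -
  define RS where "RS = rep ` {..<B}"
  define NR where "NR = {..<N} - RS"
  define M where "M = N - B"
  have injrep: "inj_on rep {..<B}" using rep by (metis inj_onI lessThan_iff)
  have cardRS: "card RS = B" using card_image[OF injrep] RS_def by simp
  have RSsub: "RS \<subseteq> {..<N}" using rep RS_def by auto
  have BN: "B \<le> N" using card_mono[OF _ RSsub] cardRS by simp
  have cardNR: "card NR = M" unfolding NR_def M_def using card_Diff_subset[OF _ RSsub] cardRS
    by (simp add: RS_def)
  have NM: "N = B + M" using BN M_def by simp
  obtain nr where nr: "bij_betw nr {0..<M} NR"
    using ex_bij_betw_nat_finite[of NR] cardNR NR_def by auto
  have nrN: "nr t < N" if "t < M" for t using nr that unfolding bij_betw_def NR_def by auto
  have nrrep: "nr t \<noteq> rep b" if "t < M" "b < B" for t b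
  proof -
    have "nr t \<in> NR" using nr that by (auto simp: bij_betw_def)
    then show ?thesis using that unfolding NR_def RS_def by auto
  qed
  have nrinj: "nr t = nr t' \<longleftrightarrow> t = t'" if "t < M" "t' < M" for t t'
    using nr that unfolding bij_betw_def inj_on_def by auto
  have blkN: "blk (nr t) < B" if "t < M" for t using blk nrN that by auto
  define P :: "'a mat" where "P = mat N N (\<lambda>(i,k). if k < B then (if i = rep k then 1 else 0)
      else if i = nr (k-B) then 1 else if i = rep (blk (nr (k-B))) then -1 else 0)"
  define Q :: "'a mat" where "Q = mat N N (\<lambda>(k,i). if k < B then (if blk i = k then 1 else 0)
      else if i = nr (k-B) then 1 else 0)"
  have P: "P \<in> carrier_mat N N" and Q: "Q \<in> carrier_mat N N" unfolding P_def Q_def by auto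
  have colP: "(\<Sum>i\<in>{0..<N}. f i * P $$ (i,l)) = (if l < B then f (rep l) else f (nr (l-B)) - f (rep (blk (nr (l-B)))))"
    if "l < N" for f l
  proof (cases "l < B")
    case True
    have "(\<Sum>i\<in>{0..<N}. f i * P $$ (i,l)) = (\<Sum>i\<in>{0..<N}. f i * (if i = rep l then 1 else 0))"
      by (rule sum.cong) (use that True in \<open>auto simp: P_def\<close>)
    also have "\<dots> = f (rep l)" by (rule sum_delta1) (use rep True in auto)
    finally show ?thesis using True by simp
  next
    case False
    have l: "l - B < M" using that False NM by simp
    have "(\<Sum>i\<in>{0..<N}. f i * P $$ (i,l)) = (\<Sum>i\<in>{0..<N}. f i * (if i = nr (l-B) then 1 else if i = rep (blk (nr (l-B))) then -1 else 0))"
      by (rule sum.cong) (use that False in \<open>auto simp: P_def\<close>)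
    also have "\<dots> = f (nr (l-B)) - f (rep (blk (nr (l-B))))"
      by (rule sum_delta2) (use nrN[OF l] rep blkN[OF l] nrrep[OF l] in auto)
    finally show ?thesis using False by simp
  qed
  have rowQ: "(\<Sum>i\<in>{0..<N}. Q $$ (k,i) * g i) = (if k < B then (\<Sum>i\<in>{0..<N}. if blk i = k then g i else 0) else g (nr (k-B)))"
    if "k < N" for g k
  proof (cases "k < B")
    case True
    then show ?thesis using that by (auto simp: Q_def intro!: sum.cong)
  next
    case False
    have k: "k - B < M" using that False NM by simp
    have "(\<Sum>i\<in>{0..<N}. Q $$ (k,i) * g i) = (\<Sum>i\<in>{0..<N}. g i * (if i = nr (k-B) then 1 else 0))"
      by (rule sum.cong) (use that False in \<open>auto simp: Q_def\<close>)
    also have "\<dots> = g (nr (k-B))" by (rule sum_delta1) (use nrN[OF k] in auto)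
    finally show ?thesis using False by simp
  qed
  have QP: "Q * P = 1\<^sub>m N"
  proof (rule eq_matI)
    fix k l assume k: "k < dim_row (1\<^sub>m N :: 'a mat)" and l: "l < dim_col (1\<^sub>m N :: 'a mat)"
    have "(Q * P) $$ (k,l) = (\<Sum>i\<in>{0..<N}. Q $$ (k,i) * P $$ (i,l))"
      using k l P Q by (simp add: scalar_prod_def)
    also have "\<dots> = 1\<^sub>m N $$ (k,l)"
    proof (cases "k < B")
      case True
      then have "(\<Sum>i\<in>{0..<N}. Q $$ (k,i) * P $$ (i,l)) = (\<Sum>i\<in>{0..<N}. (if blk i = k then 1 else 0) * P $$ (i,l))"
        using k by (auto simp: Q_def intro!: sum.cong)
      also have "\<dots> = 1\<^sub>m N $$ (k,l)"
      proof (cases "l < B")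
        case True
        then show ?thesis using colP[of l "\<lambda>i. if blk i = k then 1 else 0"] l k rep by auto
      next
        case False
        have l': "l - B < M" using l False NM by simp
        show ?thesis using colP[of l "\<lambda>i. if blk i = k then 1 else 0"] l k rep blkN[OF l'] False `k < B` by auto
      qed
      finally show ?thesis .
    next
      case False
      have k': "k - B < M" using k False NM by simp
      have "(\<Sum>i\<in>{0..<N}. Q $$ (k,i) * P $$ (i,l)) = P $$ (nr (k-B), l)"
        using rowQ[of k "\<lambda>i. P $$ (i,l)"] k False by simp
      also have "\<dots> = 1\<^sub>m N $$ (k,l)"
      proof (cases "l < B")
        case True
        then show ?thesis using nrrep[OF k' True] nrN[OF k'] l k False by (auto simp: P_def)
      next
        case F2: False
        have l': "l - B < M" using l F2 NM by simp
        show ?thesis using nrrep[OF k' blkN[OF l']] nrN[OF k'] l k False F2 nrinj[OF k' l'] by (auto simp: P_def)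
      qed
      finally show ?thesis .
    qed
    finally show "(Q * P) $$ (k,l) = 1\<^sub>m N $$ (k,l)" .
  qed (use P Q in auto)
  have PQ: "P * Q = 1\<^sub>m N" using mat_mult_left_right_inverse[OF Q P QP] .
  have AP: "(A * P) $$ (i,l) = (if l < B then A $$ (i, rep l) else A $$ (i, nr (l-B)) - A $$ (i, rep (blk (nr (l-B)))))"
    if "i < N" "l < N" for i l
  proof -
    have "(A * P) $$ (i,l) = (\<Sum>j\<in>{0..<N}. A $$ (i,j) * P $$ (j,l))"
      using that A P by (simp add: scalar_prod_def)
    then show ?thesis using colP[OF that(2), of "\<lambda>j. A $$ (i,j)"] by simp
  qed
  define D where "D = Q * A * P"
  have Dcar: "D \<in> carrier_mat N N" unfolding D_def using P Q A by simp
  have Dent: "D $$ (k,l) = (if k < B then (\<Sum>i\<in>{0..<N}. if blk i = k then (A * P) $$ (i,l) else 0) else (A * P) $$ (nr (k-B), l))"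
    if "k < N" "l < N" for k l
  proof -
    have "D $$ (k,l) = (Q * (A * P)) $$ (k,l)" unfolding D_def using P Q A by simp
    also have "\<dots> = (\<Sum>i\<in>{0..<N}. Q $$ (k,i) * (A * P) $$ (i,l))"
      using that A P Q by (simp add: scalar_prod_def)
    finally show ?thesis using rowQ[OF that(1), of "\<lambda>i. (A * P) $$ (i,l)"] by simp
  qed
  define Quot where "Quot = mat B B (\<lambda>(b,b'). if b = b' then \<delta> b + of_nat (bsize N blk b - 1) * \<alpha> b else of_nat (bsize N blk b) * \<beta> b b')"
  define X where "X = mat M B (\<lambda>(t,b). D $$ (B+t, b))"
  define Diag where "Diag = mat M M (\<lambda>(t,t'). if t = t' then \<delta> (blk (nr t)) - \<alpha> (blk (nr t)) else 0)"
  have D4: "D = four_block_mat Quot (0\<^sub>m B M) X Diag"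
  proof (rule eq_matI)
    fix k l assume k: "k < dim_row (four_block_mat Quot (0\<^sub>m B M) X Diag)"
      and l: "l < dim_col (four_block_mat Quot (0\<^sub>m B M) X Diag)"
    have kN: "k < N" and lN: "l < N" using k l NM by (auto simp: Quot_def Diag_def)
    show "D $$ (k,l) = four_block_mat Quot (0\<^sub>m B M) X Diag $$ (k,l)"
    proof (cases "k < B")
      case kB: True
      show ?thesis
      proof (cases "l < B")
        case lB: True
        have "D $$ (k,l) = (\<Sum>i\<in>{0..<N}. if blk i = k then A $$ (i, rep l) else 0)"
          using Dent[OF kN lN] kB lB AP lN by (auto intro!: sum.cong)
        also have "\<dots> = Quot $$ (k,l)" using colsum[OF Aij, of "rep l" k] rep lB kB by (auto simp: Quot_def)
        finally show ?thesis using kB lB kN lN NM by (simp add: Quot_def Diag_def)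
      next
        case lB: False
        have l': "l - B < M" using lN lB NM by simp
        let ?x = "nr (l-B)" let ?y = "rep (blk (nr (l-B)))"
        have "D $$ (k,l) = (\<Sum>i\<in>{0..<N}. (if blk i = k then A $$ (i, ?x) else 0) - (if blk i = k then A $$ (i, ?y) else 0))"
          using Dent[OF kN lN] kB lB AP lN by (auto intro!: sum.cong)
        also have "\<dots> = 0"
          unfolding sum_subtractf
          using colsum[OF Aij, of ?x k] colsum[OF Aij, of ?y k] nrN[OF l'] rep blkN[OF l'] by auto
        finally show ?thesis using kB lB kN lN NM by (simp add: Quot_def Diag_def)
      qed
    next
      case kB: False
      have k': "k - B < M" using kN kB NM by simp
      show ?thesis
      proof (cases "l < B")
        case lB: True
        show ?thesis using kB lB kN lN NM k' by (simp add: Quot_def Diag_def X_def)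
      next
        case lB: False
        have l': "l - B < M" using lN lB NM by simp
        let ?u = "nr (k-B)" let ?x = "nr (l-B)" let ?y = "rep (blk (nr (l-B)))"
        have "D $$ (k,l) = A $$ (?u, ?x) - A $$ (?u, ?y)"
          using Dent[OF kN lN] kB lB AP lN nrN[OF k'] by auto
        also have "\<dots> = Diag $$ (k-B, l-B)"
          using Aij nrN[OF k'] nrN[OF l'] rep blkN[OF l'] nrrep[OF k' blkN[OF l']] nrinj[OF k' l'] k' l'
          by (auto simp: Diag_def)
        finally show ?thesis using kB lB kN lN NM by (simp add: Quot_def Diag_def)
      qed
    qed
  qed (use Dcar NM in \<open>auto simp: Quot_def Diag_def\<close>)
  have sim: "similar_mat A D"
  proof (rule similar_matI[of A D P Q N])
    show "{A, D, P, Q} \<subseteq> carrier_mat N N" using A Dcar P Q by auto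
    show "P * Q = 1\<^sub>m N" by fact
    show "Q * P = 1\<^sub>m N" by fact
    have QA: "Q * A \<in> carrier_mat N N" using Q A by simp
    have "D * Q = Q * A * (P * Q)" unfolding D_def by (rule assoc_mult_mat[OF QA P Q])
    also have "\<dots> = Q * A" using PQ QA by (simp add: right_mult_one_mat)
    finally have DQ: "D * Q = Q * A" .
    have "P * D * Q = P * (D * Q)" by (rule assoc_mult_mat[OF P Dcar Q])
    also have "\<dots> = P * (Q * A)" by (simp add: DQ)
    also have "\<dots> = P * Q * A" by (rule assoc_mult_mat[OF P Q A, symmetric])
    also have "\<dots> = A" using PQ A by simp
    finally show "A = P * D * Q" by simp
  qed
  have "char_poly A = char_poly D" by (rule char_poly_similar[OF sim])
  also have "\<dots> = char_poly Quot * char_poly Diag"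
    unfolding D4 by (rule char_poly_four_block_upper_right_zero) (auto simp: Quot_def X_def Diag_def)
  also have "char_poly Diag = (\<Prod>b<B. [:-(\<delta> b - \<alpha> b), 1:] ^ (bsize N blk b - 1))"
  proof -
    let ?f = "\<lambda>b. [:-(\<delta> b - \<alpha> b), 1:]"
    have ut: "upper_triangular Diag" unfolding Diag_def upper_triangular_def by auto
    have Dg: "Diag \<in> carrier_mat M M" unfolding Diag_def by simp
    have "char_poly Diag = (\<Prod>a\<leftarrow>diag_mat Diag. [:- a, 1:])"
      by (rule char_poly_upper_triangular[OF Dg ut])
    also have "\<dots> = prod_list (map (\<lambda>t. ?f (blk (nr t))) [0..<M])"
      unfolding diag_mat_def using Dg by (auto simp: Diag_def comp_def intro!: arg_cong[where f=prod_list] map_cong)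
    also have "\<dots> = (\<Prod>t\<in>{0..<M}. ?f (blk (nr t)))"
      by (subst prod.distinct_set_conv_list[symmetric]) auto
    also have "\<dots> = (\<Prod>i\<in>NR. ?f (blk i))" by (rule prod.reindex_bij_betw[OF nr])
    also have "\<dots> = (\<Prod>b\<in>{..<B}. \<Prod>i\<in>{x. x \<in> NR \<and> blk x = b}. ?f (blk i))"
      by (rule prod.group[symmetric]) (use blk in \<open>auto simp: NR_def\<close>)
    also have "\<dots> = (\<Prod>b<B. ?f b ^ (bsize N blk b - 1))"
    proof (rule prod.cong[OF refl])
      fix b assume b: "b \<in> {..<B}"
      have eq: "{i. i < N \<and> blk i = b} = insert (rep b) {x. x \<in> NR \<and> blk x = b}"
        using rep b unfolding NR_def RS_def by auto
      have nin: "rep b \<notin> {x. x \<in> NR \<and> blk x = b}" unfolding NR_def RS_def using b by auto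
      have fin: "finite {x. x \<in> NR \<and> blk x = b}" unfolding NR_def by auto
      have "card {x. x \<in> NR \<and> blk x = b} = bsize N blk b - 1"
        unfolding bsize_def eq using nin fin by simp
      then show "(\<Prod>i\<in>{x. x \<in> NR \<and> blk x = b}. ?f (blk i)) = ?f b ^ (bsize N blk b - 1)"
        by simp
    qed
    finally show ?thesis .
  qed
  finally show ?thesis unfolding Quot_def .
qed
lemma block_char_poly_sz:
  fixes A :: "'a::field mat"
  assumes A: "A \<in> carrier_mat N N"
  and blk: "\<forall>i<N. blk i < B"
  and rep: "\<forall>b<B. rep b < N \<and> blk (rep b) = b"
  and Aij: "\<forall>i<N. \<forall>j<N. A $$ (i,j) = (if blk i = blk j then (if i = j then \<delta> (blk i) else \<alpha> (blk i)) else \<beta> (blk i) (blk j))"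
  and sz: "\<forall>b<B. bsize N blk b = sz b"
  shows "char_poly A = char_poly (mat B B (\<lambda>(b,b'). if b = b' then \<delta> b + of_nat (sz b - 1) * \<alpha> b else of_nat (sz b) * \<beta> b b'))
          * (\<Prod>b<B. [:-(\<delta> b - \<alpha> b), 1:] ^ (sz b - 1))"
proof -
  have "mat B B (\<lambda>(b,b'). if b = b' then \<delta> b + of_nat (bsize N blk b - 1) * \<alpha> b else of_nat (bsize N blk b) * \<beta> b b')
      = mat B B (\<lambda>(b,b'). if b = b' then \<delta> b + of_nat (sz b - 1) * \<alpha> b else of_nat (sz b) * \<beta> b b')"
    by (rule eq_matI) (use sz in auto)
  moreover have "(\<Prod>b<B. [:-(\<delta> b - \<alpha> b), 1:] ^ (bsize N blk b - 1)) = (\<Prod>b<B. [:-(\<delta> b - \<alpha> b), 1:] ^ (sz b - 1))"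
    by (rule prod.cong) (use sz in auto)
  ultimately show ?thesis using block_char_poly[OF A blk rep Aij] by simp
qed

lemma det1: assumes A: "(A :: 'a :: comm_ring_1 mat) \<in> carrier_mat 1 1" shows "det A = A $$ (0,0)"
proof -
  have "det A = (\<Sum>i<1. A $$ (i,0) * cofactor A i 0)" by (rule laplace_expansion_column[OF A]) simp
  also have "\<dots> = A $$ (0,0) * cofactor A 0 0" by simp
  also have "cofactor A 0 0 = det (mat_delete A 0 0)" by (simp add: cofactor_def)
  also have "mat_delete A 0 0 \<in> carrier_mat 0 0" using mat_delete_carrier[OF A, of 0 0] by simp
  then have "det (mat_delete A 0 0) = 1" by (rule det_dim_zero)
  finally show ?thesis by simp
qed

lemma md_idx: assumes "A \<in> carrier_mat (Suc m) (Suc m)" "i < m" "j < m"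
  shows "mat_delete A r c $$ (i,j) = A $$ (if i < r then i else Suc i, if j < c then j else Suc j)"
  using assms unfolding mat_delete_def by simp

lemma det2: assumes A: "(A :: 'a :: comm_ring_1 mat) \<in> carrier_mat 2 2"
  shows "det A = A $$ (0,0) * A $$ (1,1) - A $$ (1,0) * A $$ (0,1)"
proof -
  have A': "A \<in> carrier_mat (Suc 1) (Suc 1)" using A by (simp add: numeral_2_eq_2)
  have "det A = (\<Sum>i<2. A $$ (i,0) * cofactor A i 0)" by (rule laplace_expansion_column[OF A]) simp
  also have "\<dots> = A $$ (0,0) * cofactor A 0 0 + A $$ (1,0) * cofactor A 1 0" by (simp add: numeral_2_eq_2)
  also have "cofactor A 0 0 = A $$ (1,1)"
  proof -
    have c: "mat_delete A 0 0 \<in> carrier_mat 1 1" using mat_delete_carrier[OF A, of 0 0] by simp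
    have "cofactor A 0 0 = det (mat_delete A 0 0)" by (simp add: cofactor_def)
    also have "\<dots> = mat_delete A 0 0 $$ (0,0)" by (rule det1[OF c])
    also have "\<dots> = A $$ (1,1)" using md_idx[OF A', of 0 0 0 0] by simp
    finally show ?thesis .
  qed
  also have "cofactor A 1 0 = - A $$ (0,1)"
  proof -
    have c: "mat_delete A 1 0 \<in> carrier_mat 1 1" using mat_delete_carrier[OF A, of 1 0] by simp
    have "cofactor A 1 0 = - det (mat_delete A 1 0)" by (simp add: cofactor_def)
    also have "det (mat_delete A 1 0) = mat_delete A 1 0 $$ (0,0)" by (rule det1[OF c])
    also have "\<dots> = A $$ (0,1)" using md_idx[OF A', of 0 0 1 0] by simp
    finally show ?thesis .
  qed
  finally show ?thesis by simp
qed

lemma det3: assumes A: "(A :: 'a :: comm_ring_1 mat) \<in> carrier_mat 3 3"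
  shows "det A = A $$ (0,0) * (A $$ (1,1) * A $$ (2,2) - A $$ (2,1) * A $$ (1,2))
     - A $$ (1,0) * (A $$ (0,1) * A $$ (2,2) - A $$ (2,1) * A $$ (0,2))
     + A $$ (2,0) * (A $$ (0,1) * A $$ (1,2) - A $$ (1,1) * A $$ (0,2))"
proof -
  have A': "A \<in> carrier_mat (Suc 2) (Suc 2)" using A by (simp add: numeral_3_eq_3)
  have "det A = (\<Sum>i<3. A $$ (i,0) * cofactor A i 0)" by (rule laplace_expansion_column[OF A]) simp
  also have "\<dots> = A $$ (0,0) * cofactor A 0 0 + A $$ (1,0) * cofactor A 1 0 + A $$ (2,0) * cofactor A 2 0"
  proof -
    have "{..<3::nat} = {0,1,2}" by auto
    then show ?thesis by simp
  qed
  also have "cofactor A 0 0 = A $$ (1,1) * A $$ (2,2) - A $$ (2,1) * A $$ (1,2)"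
  proof -
    have c: "mat_delete A 0 0 \<in> carrier_mat 2 2" using mat_delete_carrier[OF A, of 0 0] by simp
    have "cofactor A 0 0 = det (mat_delete A 0 0)" by (simp add: cofactor_def)
    then show ?thesis using det2[OF c] md_idx[OF A', of 0 0 0 0] md_idx[OF A', of 1 1 0 0] md_idx[OF A', of 1 0 0 0] md_idx[OF A', of 0 1 0 0]
      by (simp add: numeral_2_eq_2)
  qed
  also have "cofactor A 1 0 = - (A $$ (0,1) * A $$ (2,2) - A $$ (2,1) * A $$ (0,2))"
  proof -
    have c: "mat_delete A 1 0 \<in> carrier_mat 2 2" using mat_delete_carrier[OF A, of 1 0] by simp
    have "cofactor A 1 0 = - det (mat_delete A 1 0)" by (simp add: cofactor_def)
    then show ?thesis using det2[OF c] md_idx[OF A', of 0 0 1 0] md_idx[OF A', of 1 1 1 0] md_idx[OF A', of 1 0 1 0] md_idx[OF A', of 0 1 1 0]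
      by (simp add: numeral_2_eq_2)
  qed
  also have "cofactor A 2 0 = A $$ (0,1) * A $$ (1,2) - A $$ (1,1) * A $$ (0,2)"
  proof -
    have c: "mat_delete A 2 0 \<in> carrier_mat 2 2" using mat_delete_carrier[OF A, of 2 0] by simp
    have "cofactor A 2 0 = det (mat_delete A 2 0)" by (simp add: cofactor_def)
    then show ?thesis using det2[OF c] md_idx[OF A', of 0 0 2 0] md_idx[OF A', of 1 1 2 0] md_idx[OF A', of 1 0 2 0] md_idx[OF A', of 0 1 2 0]
      by (simp add: numeral_2_eq_2)
  qed
  finally show ?thesis by (simp add: algebra_simps)
qed

lemma char_poly_arrow3:
  fixes Q :: "'a::comm_ring_1 mat"
  assumes Q: "Q \<in> carrier_mat 3 3" and z1: "Q $$ (1,2) = 0" and z2: "Q $$ (2,1) = 0"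
  shows "char_poly Q = [:-Q $$ (0,0), 1:] * [:-Q $$ (1,1), 1:] * [:-Q $$ (2,2), 1:]
     - Polynomial.smult (Q $$ (1,0) * Q $$ (0,1)) [:-Q $$ (2,2), 1:] - Polynomial.smult (Q $$ (2,0) * Q $$ (0,2)) [:-Q $$ (1,1), 1:]"
proof -
  have C: "char_poly_matrix Q \<in> carrier_mat 3 3" using Q by simp
  have e: "char_poly_matrix Q $$ (i,j) = (if i = j then [:-Q $$ (i,j), 1:] else [:-Q $$ (i,j):])" if "i < 3" "j < 3" for i j
    using Q that by (auto simp: char_poly_matrix_def)
  show ?thesis unfolding char_poly_def det3[OF C] using z1 z2
    by (simp add: e algebra_simps)
qed


definition per :: "nat \<Rightarrow> nat" where "per n = (if odd n then n else 2*n)"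
definition zz :: "nat \<Rightarrow> nat" where "zz n = (if odd n then 4 else 2)"
definition sblk :: "nat \<Rightarrow> nat \<Rightarrow> nat" where
  "sblk n v = (if v < 4*n then (if per n dvd v then 0 else 1) else 2 + (v - 4*n) mod per n)"
definition srep :: "nat \<Rightarrow> nat \<Rightarrow> nat" where
  "srep n b = (if b = 0 then 0 else if b = 1 then 1 else 4*n + (b-2))"
definition dg :: "nat \<Rightarrow> nat \<Rightarrow> nat" where
  "dg n b = (if b = 0 then 8*n-1 else if b = 1 then 4*n-1 else 2 * zz n - 1)"
definition bs :: "nat \<Rightarrow> nat \<Rightarrow> nat" where
  "bs n b = (if b = 0 then zz n else if b = 1 then 4*n - zz n else zz n)"

lemma four_n: "4*n = zz n * per n"
  unfolding zz_def per_def by auto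

lemma per_ge2: "n \<ge> 2 \<Longrightarrow> per n \<ge> 2"
  unfolding per_def by auto

lemma upt2: "[0..<2] = [0::nat, 1]" by (simp add: upt_rec)

lemma sd_list_eq: "sd_list n = map (\<lambda>i. (i,0)) [0..<4*n] @ map (\<lambda>i. (i,1)) [0..<4*n]"
  by (simp add: sd_list_def upt2)

lemma sd_list_len: "length (sd_list n) = 8*n"
  by (simp add: sd_list_eq)

lemma sd_list_nth: "v < 8*n \<Longrightarrow> sd_list n ! v = (v mod (4*n), v div (4*n))"
proof -
  assume v: "v < 8*n"
  note eq = sd_list_eq
  show ?thesis
  proof (cases "v < 4*n")
    case True then show ?thesis by (simp add: eq nth_append)
  next
    case False
    then have "v - 4*n < 4*n" using v by simp
    moreover have "v mod (4*n) = v - 4*n" using False v by (simp add: mod_if)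
    moreover have "v div (4*n) = 1" using False v by (simp add: div_if)
    ultimately show ?thesis using False by (simp add: eq nth_append)
  qed
qed

lemma nt_key:
  fixes x :: int
  assumes n: "n \<ge> 2"
  shows "(int (4*n) dvd (2 * int n - 2) * x) \<longleftrightarrow> (int (per n) dvd x)"
proof (cases "odd n")
  case True
  then obtain m where m: "n = 2*m+1" by (metis oddE)
  have c: "coprime (int n) (int m)"
  proof (rule coprimeI)
    fix c assume c1: "c dvd int n" and c2: "c dvd int m"
    have "c dvd 1 * int n + (-2) * int m"
      using c1 c2 by (intro dvd_add dvd_mult)
    also have "1 * int n + (-2) * int m = 1" unfolding m by simp
    finally show "is_unit c" by simp
  qed
  have "(int (4*n) dvd (2 * int n - 2) * x) \<longleftrightarrow> (4 * int n dvd 4 * (int m * x))"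
    unfolding m by (simp add: algebra_simps)
  also have "\<dots> \<longleftrightarrow> int n dvd int m * x" by (rule dvd_times_left_cancel_iff) simp
  also have "\<dots> \<longleftrightarrow> int n dvd x" using c by (simp add: coprime_dvd_mult_right_iff)
  finally show ?thesis using True by (simp add: per_def)
next
  case False
  then obtain m where m: "n = 2*m" by (metis evenE not_not)
  have c: "coprime (4 * int m) (2 * int m - 1)"
  proof (rule coprimeI)
    fix c assume c1: "c dvd 4 * int m" and c2: "c dvd 2 * int m - 1"
    have "c dvd int m * (4 * int m) + (-(2 * int m + 1)) * (2 * int m - 1)"
      by (rule dvd_add[OF dvd_mult[OF c1] dvd_mult[OF c2]])
    also have "int m * (4 * int m) + (-(2 * int m + 1)) * (2 * int m - 1) = 1" by (simp add: algebra_simps)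
    finally show "is_unit c" by simp
  qed
  have "(int (4*n) dvd (2 * int n - 2) * x) \<longleftrightarrow> (2 * (4 * int m) dvd 2 * ((2 * int m - 1) * x))"
    unfolding m by (simp add: algebra_simps)
  also have "\<dots> \<longleftrightarrow> 4 * int m dvd (2 * int m - 1) * x" by (rule dvd_times_left_cancel_iff) simp
  also have "\<dots> \<longleftrightarrow> 4 * int m dvd x" using c by (simp add: coprime_dvd_mult_right_iff)
  finally show ?thesis using False m by (simp add: per_def)
qed

lemma modeq_int: "(a::nat) mod m = b mod m \<longleftrightarrow> int m dvd int a - int b"
proof -
  have "a mod m = b mod m \<longleftrightarrow> int a mod int m = int b mod int m"
    by (metis of_nat_eq_iff of_nat_mod)
  also have "\<dots> \<longleftrightarrow> int m dvd int a - int b" by (rule mod_eq_dvd_iff)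
  finally show ?thesis .
qed

lemma sd_comm:
  assumes n: "n \<ge> 2" and i: "i < 4*n" and k: "k < 4*n" and j: "j < 2" and l: "l < 2"
  shows "sd_mult n (i,j) (k,l) = sd_mult n (k,l) (i,j) \<longleftrightarrow>
     (j = 0 \<and> l = 0) \<or> (j = 0 \<and> l = 1 \<and> per n dvd i) \<or> (j = 1 \<and> l = 0 \<and> per n dvd k)
     \<or> (j = 1 \<and> l = 1 \<and> i mod per n = k mod per n)"
proof -
  have e1: "int (2*n-1) = 2 * int n - 1" using n by simp
  have e2: "int ((2*n-1)*x) = (2*int n - 1) * int x" for x by (simp only: of_nat_mult e1)
  have base: "sd_mult n (i,j) (k,l) = sd_mult n (k,l) (i,j) \<longleftrightarrow>
      (i + (2*n-1)^j * k) mod (4*n) = (k + (2*n-1)^l * i) mod (4*n)"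
    unfolding sd_mult_def by (simp add: add.commute)
  consider "j = 0" "l = 0" | "j = 0" "l = 1" | "j = 1" "l = 0" | "j = 1" "l = 1" using j l by linarith
  then show ?thesis
  proof cases
    case 1 then show ?thesis using base by (simp add: add.commute)
  next
    case 2
    have "(i + k) mod (4*n) = (k + (2*n-1) * i) mod (4*n) \<longleftrightarrow> int (4*n) dvd int (i+k) - int (k + (2*n-1)*i)"
      by (rule modeq_int)
    also have "int (i+k) - int (k + (2*n-1)*i) = - ((2 * int n - 2) * int i)"
      by (simp only: of_nat_add e2) (simp add: algebra_simps)
    also have "int (4*n) dvd - ((2 * int n - 2) * int i) \<longleftrightarrow> int (per n) dvd int i"
      using nt_key[OF n] by simp
    finally show ?thesis using 2 base by simp
  next
    case 3
    have "(i + (2*n-1) * k) mod (4*n) = (k + i) mod (4*n) \<longleftrightarrow> int (4*n) dvd int (i + (2*n-1)*k) - int (k + i)"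
      by (rule modeq_int)
    also have "int (i + (2*n-1)*k) - int (k + i) = ((2 * int n - 2) * int k)"
      by (simp only: of_nat_add e2) (simp add: algebra_simps)
    also have "int (4*n) dvd ((2 * int n - 2) * int k) \<longleftrightarrow> int (per n) dvd int k"
      using nt_key[OF n] by simp
    finally show ?thesis using 3 base by simp
  next
    case 4
    have "(i + (2*n-1) * k) mod (4*n) = (k + (2*n-1) * i) mod (4*n) \<longleftrightarrow> int (4*n) dvd int (i + (2*n-1)*k) - int (k + (2*n-1)*i)"
      by (rule modeq_int)
    also have "int (i + (2*n-1)*k) - int (k + (2*n-1)*i) = ((2 * int n - 2) * (int k - int i))"
      by (simp only: of_nat_add e2) (simp add: algebra_simps)
    also have "int (4*n) dvd ((2 * int n - 2) * (int k - int i)) \<longleftrightarrow> int (per n) dvd (int k - int i)"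
      using nt_key[OF n] by simp
    also have "\<dots> \<longleftrightarrow> k mod per n = i mod per n" using modeq_int[of k "per n" i] by simp
    finally show ?thesis using 4 base by auto
  qed
qed

lemma comm_iff:
  assumes n: "n \<ge> 2" and v: "v < 8*n" and w: "w < 8*n"
  shows "commuting_adj n (sd_list n ! v) (sd_list n ! w) \<longleftrightarrow>
     v \<noteq> w \<and> (sblk n v = sblk n w \<or> sblk n v = 0 \<or> sblk n w = 0)"
proof -
  define i j k l where "i = v mod (4*n)" "j = v div (4*n)" "k = w mod (4*n)" "l = w div (4*n)"
  have ij: "sd_list n ! v = (i,j)" and kl: "sd_list n ! w = (k,l)"
    using sd_list_nth v w i_j_k_l_def by auto
  have i: "i < 4*n" and k: "k < 4*n" using n i_j_k_l_def by auto
  have j: "j < 2" and l: "l < 2" using v w i_j_k_l_def by (auto simp: div_less_iff_less_mult)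
  have vv: "v = i + 4*n*j" and ww: "w = k + 4*n*l" using i_j_k_l_def by auto
  have neq: "(i,j) \<noteq> (k,l) \<longleftrightarrow> v \<noteq> w" using i_j_k_l_def by (metis div_mult_mod_eq prod.inject)
  have pos: "per n > 0" using per_ge2[OF n] by simp
  have sv: "sblk n v = (if j = 0 then (if per n dvd i then 0 else 1) else 2 + i mod per n)"
  proof (cases "j = 0")
    case True then show ?thesis using vv i by (simp add: sblk_def)
  next
    case False then have "j = 1" using j by simp
    then show ?thesis using vv by (simp add: sblk_def)
  qed
  have sw: "sblk n w = (if l = 0 then (if per n dvd k then 0 else 1) else 2 + k mod per n)"
  proof (cases "l = 0")
    case True then show ?thesis using ww k by (simp add: sblk_def)
  next
    case False then have "l = 1" using l by simp
    then show ?thesis using ww by (simp add: sblk_def)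
  qed
  have jl: "(j = 0 \<or> j = 1) \<and> (l = 0 \<or> l = 1)" using j l by linarith
  have "commuting_adj n (sd_list n ! v) (sd_list n ! w) \<longleftrightarrow> v \<noteq> w \<and>
     ((j = 0 \<and> l = 0) \<or> (j = 0 \<and> l = 1 \<and> per n dvd i) \<or> (j = 1 \<and> l = 0 \<and> per n dvd k)
     \<or> (j = 1 \<and> l = 1 \<and> i mod per n = k mod per n))"
    unfolding commuting_adj_def ij kl sd_comm[OF n i k j l] neq by (rule refl)
  also have "\<dots> \<longleftrightarrow> v \<noteq> w \<and> (sblk n v = sblk n w \<or> sblk n v = 0 \<or> sblk n w = 0)"
    unfolding sv sw using jl by (elim conjE disjE) simp_all
  finally show ?thesis .
qed

lemma count_mod:
  assumes k: "k < (p::nat)"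
  shows "card {x. x < z*p \<and> x mod p = k} = z"
proof -
  have p: "p > 0" using k by simp
  have eq: "{x. x < z*p \<and> x mod p = k} = (\<lambda>t. k + p*t) ` {..<z}"
  proof (rule equalityI; rule subsetI)
    fix x assume "x \<in> {x. x < z*p \<and> x mod p = k}"
    then have x: "x < z*p" "x mod p = k" by auto
    have "x = k + p * (x div p)" using x(2) by (metis add.commute mult.commute div_mult_mod_eq)
    moreover have "x div p < z" using x(1) p by (simp add: div_less_iff_less_mult)
    ultimately show "x \<in> (\<lambda>t. k + p*t) ` {..<z}" by auto
  next
    fix x assume "x \<in> (\<lambda>t. k + p*t) ` {..<z}"
    then obtain t where t: "t < z" "x = k + p*t" by auto
    have "k + p*t < p + p*t" using k by simp
    also have "\<dots> = p * (t+1)" by simp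
    also have "\<dots> \<le> p * z" using t(1) by (intro mult_le_mono2) simp
    finally have "x < z*p" using t by (simp add: mult.commute)
    moreover have "x mod p = k" using t k by simp
    ultimately show "x \<in> {x. x < z*p \<and> x mod p = k}" by simp
  qed
  have "inj_on (\<lambda>t. k + p*t) {..<z}" using p by (auto simp: inj_on_def)
  then show ?thesis unfolding eq by (simp add: card_image)
qed

lemma bsize_s:
  assumes n: "n \<ge> 2" and b: "b < per n + 2"
  shows "bsize (8*n) (sblk n) b = bs n b"
proof -
  have pos: "per n > 0" using per_ge2[OF n] by simp
  have fn: "4*n = zz n * per n" by (rule four_n)
  have c0: "card {x. x < zz n * per n \<and> x mod per n = 0} = zz n" by (rule count_mod[OF pos])
  have s0: "{i. i < 8*n \<and> sblk n i = 0} = {x. x < zz n * per n \<and> x mod per n = 0}"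
    using fn by (auto simp: sblk_def dvd_eq_mod_eq_0 split: if_splits)
  show ?thesis
  proof (cases "b = 0")
    case True then show ?thesis unfolding bsize_def bs_def using s0 c0 by simp
  next
    case b0: False
    show ?thesis
    proof (cases "b = 1")
      case True
      have "{i. i < 8*n \<and> sblk n i = 1} = {..<4*n} - {i. i < 8*n \<and> sblk n i = 0}"
        by (auto simp: sblk_def split: if_splits)
      moreover have "{i. i < 8*n \<and> sblk n i = 0} \<subseteq> {..<4*n}"
        by (auto simp: sblk_def split: if_splits)
      ultimately have "card {i. i < 8*n \<and> sblk n i = 1} = 4*n - zz n"
        using s0 c0 by (simp add: card_Diff_subset)
      then show ?thesis using True unfolding bsize_def bs_def by simp
    next
      case b1: False
      define k where "k = b - 2"
      have k: "k < per n" and bk: "b = 2 + k" using b b0 b1 k_def by auto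
      have "{i. i < 8*n \<and> sblk n i = b} = (\<lambda>x. x + 4*n) ` {x. x < zz n * per n \<and> x mod per n = k}"
      proof (rule equalityI; rule subsetI)
        fix i assume "i \<in> {i. i < 8*n \<and> sblk n i = b}"
        then have i: "i < 8*n" "sblk n i = b" by auto
        then have "\<not> i < 4*n" using b0 b1 by (auto simp: sblk_def split: if_splits)
        then have "i = (i - 4*n) + 4*n" "i - 4*n < zz n * per n" "(i - 4*n) mod per n = k"
          using i fn bk by (auto simp: sblk_def)
        then show "i \<in> (\<lambda>x. x + 4*n) ` {x. x < zz n * per n \<and> x mod per n = k}" by blast
      next
        fix i assume "i \<in> (\<lambda>x. x + 4*n) ` {x. x < zz n * per n \<and> x mod per n = k}"
        then obtain x where "i = x + 4*n" "x < zz n * per n" "x mod per n = k" by auto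
        then show "i \<in> {i. i < 8*n \<and> sblk n i = b}" using fn bk by (auto simp: sblk_def)
      qed
      moreover have "card ((\<lambda>x. x + 4*n) ` {x. x < zz n * per n \<and> x mod per n = k}) = zz n"
        by (subst card_image) (auto simp: count_mod[OF k])
      ultimately show ?thesis unfolding bsize_def bs_def using b0 b1 by simp
    qed
  qed
qed

lemma deg_s:
  assumes n: "n \<ge> 2" and v: "v < 8*n"
  shows "graph_deg (sd_list n) (commuting_adj n) (sd_list n ! v) = dg n (sblk n v)"
proof -
  let ?f = "\<lambda>w. sd_list n ! w"
  have setl: "set (sd_list n) = ?f ` {..<8*n}"
    by (metis atLeast_upt lessThan_atLeast0 set_map map_nth sd_list_len)
  have injf: "inj_on ?f {..<8*n}"
  proof (rule inj_onI)
    fix a b assume "a \<in> {..<8*n}" "b \<in> {..<8*n}" "?f a = ?f b"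
    then show "a = b" using sd_list_nth by (metis div_mult_mod_eq lessThan_iff prod.inject)
  qed
  have "{y \<in> set (sd_list n). commuting_adj n (?f v) y} = ?f ` {w \<in> {..<8*n}. commuting_adj n (?f v) (?f w)}"
    unfolding setl by auto
  moreover have "inj_on ?f {w \<in> {..<8*n}. commuting_adj n (?f v) (?f w)}"
    by (rule inj_on_subset[OF injf]) auto
  ultimately have "graph_deg (sd_list n) (commuting_adj n) (?f v) = card {w \<in> {..<8*n}. commuting_adj n (?f v) (?f w)}"
    unfolding graph_deg_def by (simp add: card_image)
  also have "{w \<in> {..<8*n}. commuting_adj n (?f v) (?f w)} = {w. w < 8*n \<and> w \<noteq> v \<and> (sblk n v = sblk n w \<or> sblk n v = 0 \<or> sblk n w = 0)}"
    using comm_iff[OF n v] by auto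
  also have "card \<dots> = dg n (sblk n v)"
  proof -
    consider "sblk n v = 0" | "sblk n v = 1" | "sblk n v \<ge> 2" by linarith
    then show ?thesis
    proof cases
      case 1
      then have "{w. w < 8*n \<and> w \<noteq> v \<and> (sblk n v = sblk n w \<or> sblk n v = 0 \<or> sblk n w = 0)} = {..<8*n} - {v}" by auto
      then show ?thesis using 1 v by (simp add: dg_def)
    next
      case 2
      then have v4: "v < 4*n" by (auto simp: sblk_def split: if_splits)
      have "{w. w < 8*n \<and> w \<noteq> v \<and> (sblk n v = sblk n w \<or> sblk n v = 0 \<or> sblk n w = 0)} = {..<4*n} - {v}"
        using 2 by (auto simp: sblk_def split: if_splits)
      then show ?thesis using 2 v4 by (simp add: dg_def)
    next
      case 3
      let ?b = "sblk n v"
      have bl: "?b < per n + 2" using per_ge2[OF n] by (auto simp: sblk_def)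
      have eq: "{w. w < 8*n \<and> w \<noteq> v \<and> (sblk n v = sblk n w \<or> sblk n v = 0 \<or> sblk n w = 0)}
          = ({i. i < 8*n \<and> sblk n i = ?b} - {v}) \<union> {i. i < 8*n \<and> sblk n i = 0}"
        using 3 by auto
      have "card (({i. i < 8*n \<and> sblk n i = ?b} - {v}) \<union> {i. i < 8*n \<and> sblk n i = 0})
          = card ({i. i < 8*n \<and> sblk n i = ?b} - {v}) + card {i. i < 8*n \<and> sblk n i = 0}"
        by (rule card_Un_disjoint) (use 3 in auto)
      also have "card ({i. i < 8*n \<and> sblk n i = ?b} - {v}) = bs n ?b - 1"
        using bsize_s[OF n bl] v unfolding bsize_def by simp
      also have "card {i. i < 8*n \<and> sblk n i = 0} = bs n 0"
        using bsize_s[OF n, of 0] unfolding bsize_def by simp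
      finally show ?thesis unfolding eq using 3 by (simp add: bs_def dg_def zz_def)
    qed
  qed
  finally show ?thesis .
qed

definition WW :: "nat \<Rightarrow> nat \<Rightarrow> nat \<Rightarrow> complex" where
  "WW n b b' = complex_of_real (sqrt (real (dg n b)^2 + real (dg n b')^2))"
definition bet :: "nat \<Rightarrow> nat \<Rightarrow> nat \<Rightarrow> complex" where
  "bet n b b' = (if b = 0 \<or> b' = 0 then WW n b b' else 0)"

lemma S_form:
  assumes n: "n \<ge> 2"
  shows "sombor_matrix (sd_list n) (commuting_adj n) \<in> carrier_mat (8*n) (8*n)"
    "\<forall>i<8*n. \<forall>j<8*n. sombor_matrix (sd_list n) (commuting_adj n) $$ (i,j) =
       (if sblk n i = sblk n j then (if i = j then 0 else WW n (sblk n i) (sblk n i)) else bet n (sblk n i) (sblk n j))"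
proof -
  show "sombor_matrix (sd_list n) (commuting_adj n) \<in> carrier_mat (8*n) (8*n)"
    unfolding sombor_matrix_def by (simp add: sd_list_len)
  show "\<forall>i<8*n. \<forall>j<8*n. sombor_matrix (sd_list n) (commuting_adj n) $$ (i,j) =
       (if sblk n i = sblk n j then (if i = j then 0 else WW n (sblk n i) (sblk n i)) else bet n (sblk n i) (sblk n j))"
  proof (intro allI impI)
    fix i j assume i: "i < 8*n" and j: "j < 8*n"
    show "sombor_matrix (sd_list n) (commuting_adj n) $$ (i,j) =
       (if sblk n i = sblk n j then (if i = j then 0 else WW n (sblk n i) (sblk n i)) else bet n (sblk n i) (sblk n j))"
      unfolding sombor_matrix_def using i j
      by (simp add: sd_list_len comm_iff[OF n i j] deg_s[OF n i] deg_s[OF n j] WW_def bet_def)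
  qed
qed

definition Q1 :: "nat \<Rightarrow> complex mat" where
  "Q1 n = mat (per n + 2) (per n + 2) (\<lambda>(b,b'). if b = b' then 0 + of_nat (bs n b - 1) * WW n b b else of_nat (bs n b) * bet n b b')"

lemma step1:
  assumes n: "n \<ge> 2"
  shows "char_poly (sombor_matrix (sd_list n) (commuting_adj n)) = char_poly (Q1 n) * (\<Prod>b<per n + 2. [:-(0 - WW n b b), 1:] ^ (bs n b - 1))"
  unfolding Q1_def
proof (rule block_char_poly_sz[OF S_form(1)[OF n] _ _ S_form(2)[OF n]])
  show "\<forall>i<8*n. sblk n i < per n + 2" using per_ge2[OF n] by (auto simp: sblk_def)
  show "\<forall>b<per n + 2. srep n b < 8*n \<and> sblk n (srep n b) = b"
  proof (intro allI impI)
    fix b assume b: "b < per n + 2"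
    have p2: "per n \<ge> 2" by (rule per_ge2[OF n])
    have pl: "per n \<le> 4*n" unfolding per_def by auto
    show "srep n b < 8*n \<and> sblk n (srep n b) = b"
      using b p2 pl n by (auto simp: srep_def sblk_def)
  qed
  show "\<forall>b<per n + 2. bsize (8*n) (sblk n) b = bs n b" using bsize_s[OF n] by auto
qed

definition d2 :: "nat \<Rightarrow> nat \<Rightarrow> complex" where "d2 n c = of_nat (bs n c - 1) * WW n c c"
definition b2 :: "nat \<Rightarrow> nat \<Rightarrow> nat \<Rightarrow> complex" where "b2 n c c' = of_nat (bs n c) * bet n c c'"
definition s2 :: "nat \<Rightarrow> nat \<Rightarrow> nat" where "s2 n c = (if c = 2 then per n else 1)"
definition Q2 :: "nat \<Rightarrow> complex mat" where
  "Q2 n = mat 3 3 (\<lambda>(c,c'). if c = c' then d2 n c + of_nat (s2 n c - 1) * 0 else of_nat (s2 n c) * b2 n c c')"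

lemma dg_min: "dg n b = dg n (min b 2)" unfolding dg_def by auto
lemma bs_min: "bs n b = bs n (min b 2)" unfolding bs_def by auto

lemma step2:
  assumes n: "n \<ge> 2"
  shows "char_poly (Q1 n) = char_poly (Q2 n) * (\<Prod>c<3. [:-(d2 n c - 0), 1:] ^ (s2 n c - 1))"
  unfolding Q2_def
proof (rule block_char_poly_sz[where blk = "\<lambda>b. min b 2" and rep = "\<lambda>b. b"])
  show "Q1 n \<in> carrier_mat (per n + 2) (per n + 2)" unfolding Q1_def by simp
  show "\<forall>i<per n + 2. min i 2 < 3" by auto
  show "\<forall>b<3. b < per n + 2 \<and> min b 2 = b" using per_ge2[OF n] by auto
  have W: "WW n i j = WW n (min i 2) (min j 2)" for i j unfolding WW_def using dg_min[of n i] dg_min[of n j] by simp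
  show "\<forall>i<per n + 2. \<forall>j<per n + 2. Q1 n $$ (i, j) =
     (if min i 2 = min j 2 then if i = j then d2 n (min i 2) else 0 else b2 n (min i 2) (min j 2))"
  proof (intro allI impI)
    fix i j assume i: "i < per n + 2" and j: "j < per n + 2"
    show "Q1 n $$ (i, j) = (if min i 2 = min j 2 then if i = j then d2 n (min i 2) else 0 else b2 n (min i 2) (min j 2))"
    proof (cases "min i 2 = min j 2")
      case True
      then show ?thesis
      proof (cases "i = j")
        case True then show ?thesis using i j bs_min[of n i] W[of i i] by (simp add: Q1_def d2_def)
      next
        case False
        with True have "i \<noteq> 0" "j \<noteq> 0" by (auto simp: min_def split: if_splits)
        then show ?thesis using i j False True by (simp add: Q1_def bet_def)
      qed
    next
      case False
      then have ij: "i \<noteq> j" by auto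
      have z: "(min i 2 = 0 \<or> min j 2 = 0) = (i = 0 \<or> j = 0)" by auto
      have bt: "bet n i j = bet n (min i 2) (min j 2)" unfolding bet_def z W[of i j] by (rule refl)
      have "Q1 n $$ (i, j) = of_nat (bs n i) * bet n i j" using i j ij by (simp add: Q1_def)
      also have "\<dots> = b2 n (min i 2) (min j 2)" unfolding b2_def bt bs_min[of n i] by (rule refl)
      finally show ?thesis using False by simp
    qed
  qed
  show "\<forall>b<3. bsize (per n + 2) (\<lambda>b. min b 2) b = s2 n b"
  proof (intro allI impI)
    fix b :: nat assume b: "b < 3"
    have p2: "per n \<ge> 2" by (rule per_ge2[OF n])
    consider "b = 0" | "b = 1" | "b = 2" using b by linarith
    then show "bsize (per n + 2) (\<lambda>b. min b 2) b = s2 n b"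
    proof cases
      case 1
      have "{i. i < per n + 2 \<and> min i 2 = b} = {0}" using 1 by (auto simp: min_def)
      then show ?thesis using 1 by (simp add: bsize_def s2_def)
    next
      case 2
      have "{i. i < per n + 2 \<and> min i 2 = b} = {1}" using 2 p2 by (auto simp: min_def)
      then show ?thesis using 2 by (simp add: bsize_def s2_def)
    next
      case 3
      have "{i. i < per n + 2 \<and> min i 2 = b} = {2..<per n + 2}" using 3 by (auto simp: min_def)
      then show ?thesis using 3 by (simp add: bsize_def s2_def)
    qed
  qed
qed

lemma Q2_car: "Q2 n \<in> carrier_mat 3 3" unfolding Q2_def by simp

lemma Q2_cp: "char_poly (Q2 n) = [:-d2 n 0, 1:] * [:-d2 n 1, 1:] * [:-d2 n 2, 1:]
     - Polynomial.smult (b2 n 1 0 * b2 n 0 1) [:-d2 n 2, 1:] - Polynomial.smult (of_nat (per n) * b2 n 2 0 * b2 n 0 2) [:-d2 n 1, 1:]"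
proof -
  have "char_poly (Q2 n) = [:-Q2 n $$ (0,0), 1:] * [:-Q2 n $$ (1,1), 1:] * [:-Q2 n $$ (2,2), 1:]
     - Polynomial.smult (Q2 n $$ (1,0) * Q2 n $$ (0,1)) [:-Q2 n $$ (2,2), 1:] - Polynomial.smult (Q2 n $$ (2,0) * Q2 n $$ (0,2)) [:-Q2 n $$ (1,1), 1:]"
    by (rule char_poly_arrow3[OF Q2_car]) (simp_all add: Q2_def b2_def bet_def s2_def)
  then show ?thesis by (simp add: Q2_def s2_def mult.assoc)
qed

lemma cp_nonzero: assumes "A \<in> carrier_mat m m" shows "char_poly A \<noteq> 0"
  using degree_monic_char_poly[OF assms] by auto

lemma master:
  assumes n: "n \<ge> 2"
  shows "sombor_spectrum (sd_list n) (commuting_adj n) = proots (char_poly (Q2 n))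
     + replicate_mset (per n - 1) (d2 n 2) + replicate_mset (bs n 0 - 1) (- WW n 0 0)
     + replicate_mset (bs n 1 - 1) (- WW n 1 1) + replicate_mset ((bs n 2 - 1) * per n) (- WW n 2 2)"
proof -
  have F2: "(\<Prod>c<3. [:-(d2 n c - 0), 1:] ^ (s2 n c - 1)) = [:-d2 n 2, 1:] ^ (per n - 1)"
  proof -
    have "{..<3::nat} = {0,1,2}" by auto
    then show ?thesis by (simp add: s2_def)
  qed
  let ?g = "\<lambda>b. [:-(0 - WW n b b), 1:] ^ (bs n b - 1)"
  have F1: "(\<Prod>b<per n + 2. ?g b) = ?g 0 * ?g 1 * ?g 2 ^ per n"
  proof -
    have e: "{..<per n + 2} = insert 0 (insert 1 {2..<per n + 2})" by auto
    have "(\<Prod>b\<in>{2..<per n + 2}. ?g b) = (\<Prod>b\<in>{2..<per n + 2}. ?g 2)"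
    proof (rule prod.cong[OF refl])
      fix b assume "b \<in> {2..<per n + 2}"
      then have "dg n b = dg n 2" "bs n b = bs n 2" by (auto simp: dg_def bs_def)
      then show "?g b = ?g 2" by (simp add: WW_def)
    qed
    also have "\<dots> = ?g 2 ^ per n" by simp
    finally show ?thesis unfolding e by simp
  qed
  have "char_poly (sombor_matrix (sd_list n) (commuting_adj n)) =
      char_poly (Q2 n) * [:-d2 n 2, 1:] ^ (per n - 1) * (?g 0 * ?g 1 * ?g 2 ^ per n)"
    using step1[OF n] step2[OF n] F1 F2 by simp
  moreover have "char_poly (Q2 n) \<noteq> 0" by (rule cp_nonzero[OF Q2_car])
  ultimately show ?thesis
    unfolding sombor_spectrum_def
    by (simp add: proots_mult proots_power power_mult[symmetric] add_ac)
qed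

lemma WW_diag: "WW n b b = complex_of_real (real (dg n b) * sqrt 2)"
proof -
  let ?x = "real (dg n b)"
  have "?x^2 + ?x^2 = 2 * ?x^2" by simp
  then have "sqrt (?x^2 + ?x^2) = sqrt 2 * sqrt (?x^2)" by (simp add: real_sqrt_mult)
  also have "sqrt (?x^2) = ?x" by simp
  finally show ?thesis unfolding WW_def by (simp add: mult.commute)
qed

lemma WW_prod: "WW n a b * WW n b a = complex_of_real (real (dg n a)^2 + real (dg n b)^2)"
proof -
  let ?s = "real (dg n a)^2 + real (dg n b)^2"
  have sym: "WW n b a = WW n a b" unfolding WW_def by (simp add: add.commute)
  have "WW n a b * WW n a b = complex_of_real (sqrt ?s * sqrt ?s)"
    unfolding WW_def by (simp only: of_real_mult)
  also have "sqrt ?s * sqrt ?s = ?s" by simp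
  finally show ?thesis unfolding sym .
qed



lemma d2_eq: "d2 n c = complex_of_real (real (bs n c - 1) * real (dg n c) * sqrt 2)"
  unfolding d2_def WW_diag by (simp add: mult.assoc)

lemma k1_eq: "b2 n 1 0 * b2 n 0 1 = complex_of_real (real (bs n 1) * real (bs n 0) * (real (dg n 1)^2 + real (dg n 0)^2))"
proof -
  have "b2 n 1 0 * b2 n 0 1 = of_nat (bs n 1) * of_nat (bs n 0) * (WW n 1 0 * WW n 0 1)"
    unfolding b2_def bet_def by (simp add: algebra_simps)
  also have "\<dots> = complex_of_real (real (bs n 1) * real (bs n 0) * (real (dg n 1)^2 + real (dg n 0)^2))"
    unfolding WW_prod by simp
  finally show ?thesis .
qed

lemma k2_eq: "of_nat (per n) * b2 n 2 0 * b2 n 0 2 = complex_of_real (real (per n) * real (bs n 2) * real (bs n 0) * (real (dg n 2)^2 + real (dg n 0)^2))"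
proof -
  have "of_nat (per n) * b2 n 2 0 * b2 n 0 2 = of_nat (per n) * of_nat (bs n 2) * of_nat (bs n 0) * (WW n 2 0 * WW n 0 2)"
    unfolding b2_def bet_def by (simp add: algebra_simps)
  also have "\<dots> = complex_of_real (real (per n) * real (bs n 2) * real (bs n 0) * (real (dg n 2)^2 + real (dg n 0)^2))"
    unfolding WW_prod by simp
  finally show ?thesis .
qed

lemma negWW: "- WW n b b = complex_of_real (- real (dg n b) * sqrt 2)"
  unfolding WW_diag by simp

theorem corollary4p3:
  fixes n :: nat
  assumes "n \<ge> 2"
  shows "(odd n \<longrightarrow>
           sombor_spectrum (sd_list n) (commuting_adj n) =
             replicate_mset 3 (complex_of_real (- (8 * real n - 1) * sqrt 2))
           + replicate_mset (4 * n - 5) (complex_of_real (- (4 * real n - 1) * sqrt 2))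
           + replicate_mset (3 * n) (complex_of_real (- 7 * sqrt 2))
           + replicate_mset (n - 1) (complex_of_real (21 * sqrt 2))
           + proots ([:- complex_of_real (3 * (8 * real n - 1) * sqrt 2), 1:]
                     * [:- complex_of_real ((4 * real n - 5) * (4 * real n - 1) * sqrt 2), 1:]
                     * [:- complex_of_real (21 * sqrt 2), 1:]
                   - Polynomial.smult (complex_of_real (32 * (real n - 1) * (40 * real n ^ 2 - 12 * real n + 1)))
                       [:- complex_of_real (21 * sqrt 2), 1:]
                   - Polynomial.smult (complex_of_real (32 * real n * (32 * real n ^ 2 - 8 * real n + 25)))
                       [:- complex_of_real ((4 * real n - 1) * (4 * real n - 5) * sqrt 2), 1:]))
       \<and> (even n \<longrightarrow>
           sombor_spectrum (sd_list n) (commuting_adj n) =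
             replicate_mset 1 (complex_of_real (- (8 * real n - 1) * sqrt 2))
           + replicate_mset (4 * n - 3) (complex_of_real (- (4 * real n - 1) * sqrt 2))
           + replicate_mset (2 * n) (complex_of_real (- 3 * sqrt 2))
           + replicate_mset (2 * n - 1) (complex_of_real (3 * sqrt 2))
           + proots ([:- complex_of_real ((8 * real n - 1) * sqrt 2), 1:]
                     * [:- complex_of_real ((4 * real n - 1) * (4 * real n - 3) * sqrt 2), 1:]
                     * [:- complex_of_real (3 * sqrt 2), 1:]
                   - Polynomial.smult (complex_of_real (8 * (2 * real n - 1) * (40 * real n ^ 2 - 12 * real n + 1)))
                       [:- complex_of_real (3 * sqrt 2), 1:]
                   - Polynomial.smult (complex_of_real (16 * real n * (32 * real n ^ 2 - 8 * real n + 5)))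
                       [:- complex_of_real ((4 * real n - 1) * (4 * real n - 3) * sqrt 2), 1:]))"


proof (intro conjI impI)
  have n: "n \<ge> 2" by fact
  assume odd: "odd n"
  then have n3: "n \<ge> 3" using n by presburger
  have per: "per n = n" using odd by (simp add: per_def)
  have nb0: "bs n 0 - 1 = 3" "bs n 1 - 1 = 4 * n - 5" "(bs n 2 - 1) * per n = 3 * n" "per n - 1 = n - 1"
    using odd per by (auto simp: bs_def zz_def)
  have rb: "real (bs n 0 - 1) = 3" "real (bs n 1 - 1) = 4 * real n - 5" "real (bs n 2 - 1) = 3"
    "real (bs n 1) = 4 * real n - 4" "real (bs n 0) = 4" "real (bs n 2) = 4" "real (per n) = real n"
    using odd n3 per by (auto simp: bs_def zz_def of_nat_diff)
  have rd: "real (dg n 0) = 8 * real n - 1" "real (dg n 1) = 4 * real n - 1" "real (dg n 2) = 7"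
    using odd n3 by (auto simp: dg_def zz_def of_nat_diff)
  have e0: "d2 n 0 = complex_of_real (3 * (8 * real n - 1) * sqrt 2)" unfolding d2_eq rb rd ..
  have e1: "d2 n 1 = complex_of_real ((4 * real n - 5) * (4 * real n - 1) * sqrt 2)" unfolding d2_eq rb rd ..
  have e1': "d2 n 1 = complex_of_real ((4 * real n - 1) * (4 * real n - 5) * sqrt 2)" unfolding d2_eq rb rd
    by (simp add: mult.commute)
  have e2: "d2 n 2 = complex_of_real (21 * sqrt 2)" unfolding d2_eq rb rd by simp
  have k1: "b2 n 1 0 * b2 n 0 1 = complex_of_real (32 * (real n - 1) * (40 * real n ^ 2 - 12 * real n + 1))"
    unfolding k1_eq rb rd by (rule arg_cong[where f = complex_of_real]) (simp add: algebra_simps power2_eq_square)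
  have k2: "of_nat (per n) * b2 n 2 0 * b2 n 0 2 = complex_of_real (32 * real n * (32 * real n ^ 2 - 8 * real n + 25))"
    unfolding k2_eq rb rd by (rule arg_cong[where f = complex_of_real]) (simp add: algebra_simps power2_eq_square)
  have cp: "char_poly (Q2 n) = [:- complex_of_real (3 * (8 * real n - 1) * sqrt 2), 1:]
                     * [:- complex_of_real ((4 * real n - 5) * (4 * real n - 1) * sqrt 2), 1:]
                     * [:- complex_of_real (21 * sqrt 2), 1:]
                   - Polynomial.smult (complex_of_real (32 * (real n - 1) * (40 * real n ^ 2 - 12 * real n + 1)))
                       [:- complex_of_real (21 * sqrt 2), 1:]
                   - Polynomial.smult (complex_of_real (32 * real n * (32 * real n ^ 2 - 8 * real n + 25)))
                       [:- complex_of_real ((4 * real n - 1) * (4 * real n - 5) * sqrt 2), 1:]"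
    unfolding Q2_cp k1 k2 e0 e2 by (simp only: e1 flip: e1')
  have w: "- WW n 0 0 = complex_of_real (- (8 * real n - 1) * sqrt 2)"
     "- WW n 1 1 = complex_of_real (- (4 * real n - 1) * sqrt 2)"
     "- WW n 2 2 = complex_of_real (- 7 * sqrt 2)"
    unfolding negWW rd by simp_all
  show "sombor_spectrum (sd_list n) (commuting_adj n) =
             replicate_mset 3 (complex_of_real (- (8 * real n - 1) * sqrt 2))
           + replicate_mset (4 * n - 5) (complex_of_real (- (4 * real n - 1) * sqrt 2))
           + replicate_mset (3 * n) (complex_of_real (- 7 * sqrt 2))
           + replicate_mset (n - 1) (complex_of_real (21 * sqrt 2))
           + proots ([:- complex_of_real (3 * (8 * real n - 1) * sqrt 2), 1:]
                     * [:- complex_of_real ((4 * real n - 5) * (4 * real n - 1) * sqrt 2), 1:]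
                     * [:- complex_of_real (21 * sqrt 2), 1:]
                   - Polynomial.smult (complex_of_real (32 * (real n - 1) * (40 * real n ^ 2 - 12 * real n + 1)))
                       [:- complex_of_real (21 * sqrt 2), 1:]
                   - Polynomial.smult (complex_of_real (32 * real n * (32 * real n ^ 2 - 8 * real n + 25)))
                       [:- complex_of_real ((4 * real n - 1) * (4 * real n - 5) * sqrt 2), 1:])"
    unfolding master[OF n] cp nb0 e2 w by (simp add: add_ac)
next
  have n: "n \<ge> 2" by fact
  assume ev: "even n"
  have per: "per n = 2 * n" using ev by (simp add: per_def)
  have nb0: "bs n 0 - 1 = 1" "bs n 1 - 1 = 4 * n - 3" "(bs n 2 - 1) * per n = 2 * n" "per n - 1 = 2 * n - 1"
    using ev per by (auto simp: bs_def zz_def)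
  have rb: "real (bs n 0 - 1) = 1" "real (bs n 1 - 1) = 4 * real n - 3" "real (bs n 2 - 1) = 1"
    "real (bs n 1) = 4 * real n - 2" "real (bs n 0) = 2" "real (bs n 2) = 2" "real (per n) = 2 * real n"
    using ev n per by (auto simp: bs_def zz_def of_nat_diff)
  have rd: "real (dg n 0) = 8 * real n - 1" "real (dg n 1) = 4 * real n - 1" "real (dg n 2) = 3"
    using ev n by (auto simp: dg_def zz_def of_nat_diff)
  have e0: "d2 n 0 = complex_of_real ((8 * real n - 1) * sqrt 2)" unfolding d2_eq rb rd by simp
  have e1: "d2 n 1 = complex_of_real ((4 * real n - 1) * (4 * real n - 3) * sqrt 2)" unfolding d2_eq rb rd
    by (simp add: mult.commute)
  have e2: "d2 n 2 = complex_of_real (3 * sqrt 2)" unfolding d2_eq rb rd by simp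
  have k1: "b2 n 1 0 * b2 n 0 1 = complex_of_real (8 * (2 * real n - 1) * (40 * real n ^ 2 - 12 * real n + 1))"
    unfolding k1_eq rb rd by (rule arg_cong[where f = complex_of_real]) (simp add: algebra_simps power2_eq_square)
  have k2: "of_nat (per n) * b2 n 2 0 * b2 n 0 2 = complex_of_real (16 * real n * (32 * real n ^ 2 - 8 * real n + 5))"
    unfolding k2_eq rb rd by (rule arg_cong[where f = complex_of_real]) (simp add: algebra_simps power2_eq_square)
  have cp: "char_poly (Q2 n) = [:- complex_of_real ((8 * real n - 1) * sqrt 2), 1:]
                     * [:- complex_of_real ((4 * real n - 1) * (4 * real n - 3) * sqrt 2), 1:]
                     * [:- complex_of_real (3 * sqrt 2), 1:]
                   - Polynomial.smult (complex_of_real (8 * (2 * real n - 1) * (40 * real n ^ 2 - 12 * real n + 1)))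
                       [:- complex_of_real (3 * sqrt 2), 1:]
                   - Polynomial.smult (complex_of_real (16 * real n * (32 * real n ^ 2 - 8 * real n + 5)))
                       [:- complex_of_real ((4 * real n - 1) * (4 * real n - 3) * sqrt 2), 1:]"
    unfolding Q2_cp k1 k2 e0 e1 e2 ..
  have w: "- WW n 0 0 = complex_of_real (- (8 * real n - 1) * sqrt 2)"
     "- WW n 1 1 = complex_of_real (- (4 * real n - 1) * sqrt 2)"
     "- WW n 2 2 = complex_of_real (- 3 * sqrt 2)"
    unfolding negWW rd by simp_all
  show "sombor_spectrum (sd_list n) (commuting_adj n) =
             replicate_mset 1 (complex_of_real (- (8 * real n - 1) * sqrt 2))
           + replicate_mset (4 * n - 3) (complex_of_real (- (4 * real n - 1) * sqrt 2))
           + replicate_mset (2 * n) (complex_of_real (- 3 * sqrt 2))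
           + replicate_mset (2 * n - 1) (complex_of_real (3 * sqrt 2))
           + proots ([:- complex_of_real ((8 * real n - 1) * sqrt 2), 1:]
                     * [:- complex_of_real ((4 * real n - 1) * (4 * real n - 3) * sqrt 2), 1:]
                     * [:- complex_of_real (3 * sqrt 2), 1:]
                   - Polynomial.smult (complex_of_real (8 * (2 * real n - 1) * (40 * real n ^ 2 - 12 * real n + 1)))
                       [:- complex_of_real (3 * sqrt 2), 1:]
                   - Polynomial.smult (complex_of_real (16 * real n * (32 * real n ^ 2 - 8 * real n + 5)))
                       [:- complex_of_real ((4 * real n - 1) * (4 * real n - 3) * sqrt 2), 1:])"
    unfolding master[OF n] cp nb0 e2 w by (simp add: add_ac)
qed


end
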